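(* Let $(C,f,P,Q)$ be a postcritically finite quadratic morphism over a field $K$ of characteristic $\ne2$. Then its postcritical orbit $\Gamma=\{f^n(P),f^n(Q)\mid n\ge1\}$, together with the map $\tau\colon\Gamma\to\Gamma$ induced by $f$ and the distinguished elements $i_1:=f(P)$ and $j_1:=f(Q)$, is a finite mapping scheme.
   Context: A quadratic morphism over a field $K$ (of characteristic $\ne2$) is a quadruple $(C,f,P,Q)$ with $C\cong\mathbb{P}^1_K$, $f\colon C\to C$ a morphism of degree $2$, and $P,Q\in C(K)$ the points whose images are precisely the critical points of $f$ (where $df=0$). The postcritical orbit is $\{f^n(P),f^n(Q)\mid n\ge1\}$, and $f$ is postcritically finite if this set is finite. A finite mapping scheme is a quadruple $(\Gamma,\tau,i_1,j_1)$ consisting of a finite set $\Gamma$, a map $\tau\colon\Gamma\to\Gamma$ and two distinct elements $i_1,j_1\in\Gamma$ such that, writing $i_n:=\tau^{n-1}(i_1)$, $j_n:=\tau^{n-1}(j_1)$ for $n\ge2$: (a) $\Gamma=\{i_n,j_n\mid n\ge1\}$; (b) $|\tau^{-1}(\gamma)|\le2$ for all $\gamma\in\Gamma$; (c) $|\tau^{-1}(i_1)|\le1$ and $|\tau^{-1}(j_1)|\le1$. *)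

theory Defs
  imports Main
begin

text \<open>The projective line P^1 over a field 'k is modelled as 'k option:
  Some t is the point [t:1], None is the point at infinity [1:0].\<close>

type_synonym 'k P1 = "'k option"

definition hom_coords :: "'k::field P1 \<Rightarrow> 'k \<times> 'k" where
  "hom_coords p = (case p of None \<Rightarrow> (1, 0) | Some t \<Rightarrow> (t, 1))"

definition proj_pt :: "'k::field \<times> 'k \<Rightarrow> 'k P1" where
  "proj_pt xy = (if snd xy = 0 then None else Some (fst xy / snd xy))"

definition bqf :: "'k::field \<Rightarrow> 'k \<Rightarrow> 'k \<Rightarrow> 'k \<times> 'k \<Rightarrow> 'k" where
  "bqf a b c xy = a * (fst xy)^2 + b * fst xy * snd xy + c * (snd xy)^2"

definition bqf_resultant :: "'k::field \<Rightarrow> 'k \<Rightarrow> 'k \<Rightarrow> 'k \<Rightarrow> 'k \<Rightarrow> 'k \<Rightarrow> 'k" where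
  "bqf_resultant a b c d e g = (a * g - c * d)^2 - (a * e - b * d) * (b * g - c * e)"

definition qmap :: "'k::field \<Rightarrow> 'k \<Rightarrow> 'k \<Rightarrow> 'k \<Rightarrow> 'k \<Rightarrow> 'k \<Rightarrow> 'k P1 \<Rightarrow> 'k P1" where
  "qmap a b c d e g p = proj_pt (bqf a b c (hom_coords p), bqf d e g (hom_coords p))"

text \<open>Jacobian determinant F_x G_y - F_y G_x of the homogeneous lift (F,G);
  a point is critical (df = 0) iff it vanishes there.\<close>
definition qjac :: "'k::field \<Rightarrow> 'k \<Rightarrow> 'k \<Rightarrow> 'k \<Rightarrow> 'k \<Rightarrow> 'k \<Rightarrow> 'k \<times> 'k \<Rightarrow> 'k" where
  "qjac a b c d e g xy =
     (let x = fst xy; y = snd xy in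
       (2*a*x + b*y) * (e*x + 2*g*y) - (b*x + 2*c*y) * (2*d*x + e*y))"

definition critical_points :: "'k::field \<Rightarrow> 'k \<Rightarrow> 'k \<Rightarrow> 'k \<Rightarrow> 'k \<Rightarrow> 'k \<Rightarrow> 'k P1 set" where
  "critical_points a b c d e g = {p. qjac a b c d e g (hom_coords p) = 0}"

text \<open>(P^1, f, P, Q) is a quadratic morphism: f has degree 2 (given by two
  binary quadratic forms with nonvanishing resultant) and P, Q are precisely
  the critical points of f.\<close>
definition quadratic_morphism :: "('k::field P1 \<Rightarrow> 'k P1) \<Rightarrow> 'k P1 \<Rightarrow> 'k P1 \<Rightarrow> bool" where
  "quadratic_morphism f P Q \<longleftrightarrow>
     (\<exists>a b c d e g. bqf_resultant a b c d e g \<noteq> 0 \<and> f = qmap a b c d e g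
        \<and> critical_points a b c d e g = {P, Q})"

definition postcritical_orbit :: "('a \<Rightarrow> 'a) \<Rightarrow> 'a \<Rightarrow> 'a \<Rightarrow> 'a set" where
  "postcritical_orbit f P Q = {(f ^^ n) P | n. n \<ge> 1} \<union> {(f ^^ n) Q | n. n \<ge> 1}"

definition postcritically_finite :: "('a \<Rightarrow> 'a) \<Rightarrow> 'a \<Rightarrow> 'a \<Rightarrow> bool" where
  "postcritically_finite f P Q \<longleftrightarrow> finite (postcritical_orbit f P Q)"

text \<open>Finite mapping scheme (\<Gamma>, \<tau>, i1, j1); \<tau> is a function whose restriction
  to \<Gamma> is the map \<Gamma> \<rightarrow> \<Gamma>; i_n = \<tau>^(n-1) i1, j_n = \<tau>^(n-1) j1.\<close>
definition finite_mapping_scheme :: "'a set \<Rightarrow> ('a \<Rightarrow> 'a) \<Rightarrow> 'a \<Rightarrow> 'a \<Rightarrow> bool" where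
  "finite_mapping_scheme \<Gamma> \<tau> i1 j1 \<longleftrightarrow>
     finite \<Gamma> \<and> (\<forall>x\<in>\<Gamma>. \<tau> x \<in> \<Gamma>) \<and> i1 \<in> \<Gamma> \<and> j1 \<in> \<Gamma> \<and> i1 \<noteq> j1 \<and>
     \<Gamma> = {(\<tau> ^^ n) i1 | n. True} \<union> {(\<tau> ^^ n) j1 | n. True} \<and>
     (\<forall>\<gamma>\<in>\<Gamma>. card {x\<in>\<Gamma>. \<tau> x = \<gamma>} \<le> 2) \<and>
     card {x\<in>\<Gamma>. \<tau> x = i1} \<le> 1 \<and>
     card {x\<in>\<Gamma>. \<tau> x = j1} \<le> 1"

end

theory Submission
  imports Defs
begin

lemma hc_simps[simp]: "hom_coords None = (1,0)" "hom_coords (Some t) = (t,1)"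
  by (simp_all add: hom_coords_def)

lemma bqf_None[simp]: "bqf A B C (1,0) = A" and bqf_Some[simp]: "bqf A B C (t,1) = A*t^2 + B*t + C"
  by (simp_all add: bqf_def)

lemma no_common_zero:
  fixes a b c d e g :: "'k::field"
  assumes "bqf_resultant a b c d e g \<noteq> 0" "bqf a b c (hom_coords p) = 0" "bqf d e g (hom_coords p) = 0"
  shows False
proof (cases p)
  case None thus False using assms by (simp add: bqf_resultant_def)
next
  case (Some t)
  have "a*t^2+b*t+c = 0" "d*t^2+e*t+g = 0" using assms Some by simp_all
  hence "bqf_resultant a b c d e g = 0" unfolding bqf_resultant_def by algebra
  thus False using assms by simp
qed

lemma two_fin:
  fixes A B C r s :: "'k::field"
  assumes "A*r^2+B*r+C = 0" "A*s^2+B*s+C = 0" "r \<noteq> s"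
  shows "A*(r+s)+B = 0"
proof -
  have "(r-s)*(A*(r+s)+B) = 0" using assms(1,2) by algebra
  thus ?thesis using assms(3) by simp
qed

lemma three_roots:
  fixes A B C :: "'k::field"
  assumes nz: "\<not>(A=0 \<and> B=0 \<and> C=0)"
    and r: "bqf A B C (hom_coords p) = 0" "bqf A B C (hom_coords q) = 0" "bqf A B C (hom_coords r) = 0"
    and d: "p \<noteq> q" "p \<noteq> r" "q \<noteq> r"
  shows False
proof -
  have one_none: "A = 0 \<and> B = 0 \<and> C = 0" if "A = 0" "A*s^2+B*s+C = 0" "A*t^2+B*t+C = 0" "s \<noteq> t" for s t
  proof -
    have "A*(s+t)+B = 0" using two_fin that by blast
    hence "B = 0" using that by simp
    thus ?thesis using that by simp
  qed
  have all_some: "A = 0 \<and> B = 0 \<and> C = 0" if "A*s^2+B*s+C = 0" "A*t^2+B*t+C = 0" "A*u^2+B*u+C = 0"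
     "s \<noteq> t" "s \<noteq> u" "t \<noteq> u" for s t u
  proof -
    have 1: "A*(s+t)+B = 0" using two_fin that by blast
    have 2: "A*(s+u)+B = 0" using two_fin that by blast
    have "A*(t-u) = 0" using 1 2 by algebra
    hence "A = 0" using that by simp
    thus ?thesis using one_none that by blast
  qed
  have none_case: "A = 0 \<and> B = 0 \<and> C = 0"
    if h: "u = None" "bqf A B C (hom_coords u) = 0" "bqf A B C (hom_coords v) = 0"
       "bqf A B C (hom_coords w) = 0" "u \<noteq> v" "u \<noteq> w" "v \<noteq> w" for u v w
  proof -
    obtain s where s: "v = Some s" using h(1,5) by (cases v) auto
    obtain t where t: "w = Some t" using h(1,6) by (cases w) auto
    show ?thesis using one_none[of s t] that s t by simp
  qed
  have "A = 0 \<and> B = 0 \<and> C = 0"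
  proof (cases "p = None")
    case True thus ?thesis using none_case[of p q r] r d by blast
  next
    case pn: False
    show ?thesis
    proof (cases "q = None")
      case True thus ?thesis using none_case[of q p r] r d by blast
    next
      case qn: False
      show ?thesis
      proof (cases "r = None")
        case True thus ?thesis using none_case[of r p q] r d by blast
      next
        case False
        then obtain s t u where "p = Some s" "q = Some t" "r = Some u" using pn qn by auto
        thus ?thesis using all_some[of s t u] r d by simp
      qed
    qed
  qed
  thus False using nz by blast
qed

lemma double_root:
  fixes A B C :: "'k::field"
  assumes two: "(2::'k) \<noteq> 0" and nz: "\<not>(A=0 \<and> B=0 \<and> C=0)"
    and r: "bqf A B C (hom_coords p) = 0" "bqf A B C (hom_coords q) = 0"
    and gr: "2*A*fst (hom_coords p) + B*snd (hom_coords p) = 0"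
            "B*fst (hom_coords p) + 2*C*snd (hom_coords p) = 0"
    and d: "p \<noteq> q"
  shows False
proof (cases p)
  case None
  then obtain t where q: "q = Some t" using d by (cases q) auto
  show False using None q r gr nz two by auto
next
  case (Some s)
  note hs = r gr
  show False
  proof (cases q)
    case None
    thus False using Some hs nz two by auto
  next
    case (Some t)
    have e1: "A*s^2+B*s+C = 0" "A*t^2+B*t+C = 0" "2*A*s+B = 0" "B*s+2*C = 0" "s \<noteq> t"
      using hs Some \<open>p = Some s\<close> d by auto
    have "A*(s+t)+B = 0" using two_fin e1 by blast
    hence "A*(t-s) = 0" using e1(3) by algebra
    hence A: "A = 0" using e1 by simp
    hence "B = 0" using e1 two by simp
    hence "C = 0" using e1 A two by simp
    thus False using nz A \<open>B=0\<close> by simp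
  qed
qed

lemma other_root:
  fixes \<alpha> \<beta> \<gamma> :: "'k::field"
  assumes disc: "\<beta>^2 - 4*\<alpha>*\<gamma> \<noteq> 0" and r: "bqf \<alpha> \<beta> \<gamma> (hom_coords p) = 0"
  shows "\<exists>q. q \<noteq> p \<and> bqf \<alpha> \<beta> \<gamma> (hom_coords q) = 0"
proof (cases p)
  case None
  hence a: "\<alpha> = 0" using r by simp
  hence b: "\<beta> \<noteq> 0" using disc by simp
  have "bqf \<alpha> \<beta> \<gamma> (hom_coords (Some (-\<gamma>/\<beta>))) = 0" using a b by simp
  thus ?thesis using None by blast
next
  case (Some s)
  have e: "\<alpha>*s^2+\<beta>*s+\<gamma> = 0" using r Some by simp
  show ?thesis
  proof (cases "\<alpha> = 0")
    case True thus ?thesis using Some by (intro exI[of _ None]) simp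
  next
    case False
    define t where "t = -\<beta>/\<alpha> - s"
    have "\<alpha>*t^2+\<beta>*t+\<gamma> = \<alpha>*s^2+\<beta>*s+\<gamma>" unfolding t_def using False
      by (simp add: field_simps power2_eq_square)
    hence rt: "\<alpha>*t^2+\<beta>*t+\<gamma> = 0" using e by simp
    have "t \<noteq> s"
    proof
      assume "t = s"
      define q where "q = \<beta>/\<alpha>"
      have bq: "\<beta> = \<alpha>*q" unfolding q_def using False by simp
      have "-q - s = s" using \<open>t = s\<close> unfolding t_def q_def by simp
      hence qs: "q = -2*s" by (simp add: algebra_simps) (metis add_eq_0_iff diff_add_cancel mult_2 add.commute minus_add_distrib)
      have "\<beta>^2 - 4*\<alpha>*\<gamma> = 0" using e bq qs by algebra
      thus False using disc by simp
    qed
    thus ?thesis using rt Some by (intro exI[of _ "Some t"]) simp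
  qed
qed

lemma card_le2:
  assumes "\<And>x y z. x\<in>S \<Longrightarrow> y\<in>S \<Longrightarrow> z\<in>S \<Longrightarrow> x\<noteq>y \<Longrightarrow> x\<noteq>z \<Longrightarrow> y\<noteq>z \<Longrightarrow> False"
  shows "card S \<le> 2"
proof (rule ccontr)
  assume "\<not> card S \<le> 2"
  hence c: "card S \<ge> 3" by simp
  have "finite S" using c by (rule_tac ccontr) simp
  then obtain xs where xs: "set xs = S" "distinct xs" using finite_distinct_list by blast
  have "length xs = card S" using distinct_card[OF xs(2)] xs(1) by simp
  hence l: "length xs \<ge> 3" using c by simp
  have m: "xs!0 \<in> S" "xs!1 \<in> S" "xs!2 \<in> S" unfolding xs(1)[symmetric] using l by (auto intro!: nth_mem)
  have ne: "xs \<noteq> []" using l by auto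
  have n1: "xs!0 \<noteq> xs!1" using nth_eq_iff_index_eq[OF xs(2), of 0 1] l ne by simp
  have n2: "xs!0 \<noteq> xs!2" using nth_eq_iff_index_eq[OF xs(2), of 0 2] l ne by simp
  have n3: "xs!1 \<noteq> xs!2" using nth_eq_iff_index_eq[OF xs(2), of 1 2] l by simp
  show False using assms[OF m n1 n2 n3] .
qed

lemma Kform: "bqf (a*G - d*F) (b*G - e*F) (c*G - g*F) X = bqf a b c X * G - bqf d e g X * F"
  unfolding bqf_def by algebra

lemma fiber_K:
  fixes a b c d e g :: "'k::field"
  assumes "qmap a b c d e g x = qmap a b c d e g w"
  shows "bqf a b c (hom_coords x) * bqf d e g (hom_coords w) - bqf d e g (hom_coords x) * bqf a b c (hom_coords w) = 0"
proof -
  define Fx where "Fx = bqf a b c (hom_coords x)"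
  define Gx where "Gx = bqf d e g (hom_coords x)"
  define Fw where "Fw = bqf a b c (hom_coords w)"
  define Gw where "Gw = bqf d e g (hom_coords w)"
  have eq: "proj_pt (Fx, Gx) = proj_pt (Fw, Gw)" using assms unfolding qmap_def Fx_def Gx_def Fw_def Gw_def .
  have "Fx * Gw - Gx * Fw = 0"
  proof (cases "Gx = 0")
    case True
    hence "Gw = 0" using eq by (auto simp: proj_pt_def split: if_splits)
    thus ?thesis using True by simp
  next
    case False
    hence "Gw \<noteq> 0" "Fx / Gx = Fw / Gw" using eq by (auto simp: proj_pt_def split: if_splits)
    thus ?thesis using False by (simp add: field_simps)
  qed
  thus ?thesis unfolding Fx_def Gx_def Fw_def Gw_def .
qed

lemma K_nz:
  fixes a b c d e g :: "'k::field"
  assumes "bqf_resultant a b c d e g \<noteq> 0"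
  shows "\<not>(a*bqf d e g (hom_coords w) - d*bqf a b c (hom_coords w) = 0 \<and>
            b*bqf d e g (hom_coords w) - e*bqf a b c (hom_coords w) = 0 \<and>
            c*bqf d e g (hom_coords w) - g*bqf a b c (hom_coords w) = 0)"
proof
  define F where "F = bqf a b c (hom_coords w)"
  define G where "G = bqf d e g (hom_coords w)"
  assume h: "a*bqf d e g (hom_coords w) - d*bqf a b c (hom_coords w) = 0 \<and>
            b*bqf d e g (hom_coords w) - e*bqf a b c (hom_coords w) = 0 \<and>
            c*bqf d e g (hom_coords w) - g*bqf a b c (hom_coords w) = 0"
  hence h': "a*G - d*F = 0" "b*G - e*F = 0" "c*G - g*F = 0" unfolding F_def G_def by auto
  have "bqf_resultant a b c d e g * G^2 = 0" "bqf_resultant a b c d e g * F^2 = 0"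
    using h' unfolding bqf_resultant_def by algebra+
  hence "F = 0" "G = 0" using assms by auto
  thus False using no_common_zero[OF assms] unfolding F_def G_def by blast
qed

lemma fiber_le2:
  fixes a b c d e g :: "'k::field"
  assumes res: "bqf_resultant a b c d e g \<noteq> 0"
  shows "card {x\<in>S. qmap a b c d e g x = z} \<le> 2"
proof (cases "\<exists>w. qmap a b c d e g w = z")
  case False
  hence E: "{x\<in>S. qmap a b c d e g x = z} = {}" using False by auto
  show ?thesis by (subst E) simp
next
  case True
  then obtain w where w: "qmap a b c d e g w = z" by blast
  define F where "F = bqf a b c (hom_coords w)"
  define G where "G = bqf d e g (hom_coords w)"
  have root: "bqf (a*G - d*F) (b*G - e*F) (c*G - g*F) (hom_coords x) = 0"
    if "qmap a b c d e g x = z" for x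
    using fiber_K[of a b c d e g x w] that w unfolding Kform F_def G_def by simp
  have nz: "\<not>(a*G - d*F = 0 \<and> b*G - e*F = 0 \<and> c*G - g*F = 0)"
    using K_nz[OF res, of w] unfolding F_def G_def .
  show ?thesis
    by (rule card_le2) (use three_roots[OF nz] root in blast)
qed

lemma crit_fiber:
  fixes a b c d e g :: "'k::field"
  assumes res: "bqf_resultant a b c d e g \<noteq> 0" and two: "(2::'k) \<noteq> 0"
    and crit: "qjac a b c d e g (hom_coords w) = 0"
    and eq: "qmap a b c d e g x = qmap a b c d e g w"
  shows "x = w"
proof (rule ccontr)
  assume ne: "x \<noteq> w"
  define F where "F = bqf a b c (hom_coords w)"
  define G where "G = bqf d e g (hom_coords w)"
  define x0 where "x0 = fst (hom_coords w)"
  define y0 where "y0 = snd (hom_coords w)"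
  have hw: "hom_coords w = (x0, y0)" unfolding x0_def y0_def by simp
  have J: "(2*a*x0 + b*y0) * (e*x0 + 2*g*y0) - (b*x0 + 2*c*y0) * (2*d*x0 + e*y0) = 0"
    using crit unfolding qjac_def hw Let_def by simp
  have FG: "F = a*x0^2 + b*x0*y0 + c*y0^2" "G = d*x0^2 + e*x0*y0 + g*y0^2"
    unfolding F_def G_def hw bqf_def by simp_all
  have "2*(2*(a*G - d*F)*x0 + (b*G - e*F)*y0) = 0"
    using J unfolding FG by algebra
  hence g1: "2*(a*G - d*F)*x0 + (b*G - e*F)*y0 = 0" using two by (metis mult_eq_0_iff)
  have "2*((b*G - e*F)*x0 + 2*(c*G - g*F)*y0) = 0"
    using J unfolding FG by algebra
  hence g2: "(b*G - e*F)*x0 + 2*(c*G - g*F)*y0 = 0" using two by (metis mult_eq_0_iff)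
  have nz: "\<not>(a*G - d*F = 0 \<and> b*G - e*F = 0 \<and> c*G - g*F = 0)"
    using K_nz[OF res, of w] unfolding F_def G_def .
  have rw: "bqf (a*G - d*F) (b*G - e*F) (c*G - g*F) (hom_coords w) = 0"
    unfolding Kform F_def G_def by simp
  have rx: "bqf (a*G - d*F) (b*G - e*F) (c*G - g*F) (hom_coords x) = 0"
    using fiber_K[OF eq] unfolding Kform F_def G_def by simp
  show False
    using double_root[OF two nz rw rx] g1 g2 ne unfolding hw by auto
qed

lemma qjac_bqf: "qjac a b c d e g xy = bqf (2*(a*e-b*d)) (4*(a*g-c*d)) (2*(b*g-c*e)) xy"
  unfolding qjac_def bqf_def Let_def by algebra

lemma P_ne_Q:
  fixes a b c d e g :: "'k::field"
  assumes res: "bqf_resultant a b c d e g \<noteq> 0" and two: "(2::'k) \<noteq> 0"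
    and cp: "critical_points a b c d e g = {P, Q}"
  shows "P \<noteq> Q"
proof
  assume PQ: "P = Q"
  have disc: "(4*(a*g-c*d))^2 - 4*(2*(a*e-b*d))*(2*(b*g-c*e)) = (2*2*2*2) * bqf_resultant a b c d e g"
    unfolding bqf_resultant_def by algebra
  have four: "(2*2*2*2::'k) \<noteq> 0" using two by (metis mult_eq_0_iff)
  have dnz: "(4*(a*g-c*d))^2 - 4*(2*(a*e-b*d))*(2*(b*g-c*e)) \<noteq> 0" using disc res four by (metis mult_eq_0_iff)
  have "P \<in> critical_points a b c d e g" using cp by simp
  hence "bqf (2*(a*e-b*d)) (4*(a*g-c*d)) (2*(b*g-c*e)) (hom_coords P) = 0"
    unfolding critical_points_def qjac_bqf by simp
  then obtain q where q: "q \<noteq> P" "bqf (2*(a*e-b*d)) (4*(a*g-c*d)) (2*(b*g-c*e)) (hom_coords q) = 0"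
    using other_root[OF dnz] by blast
  hence "q \<in> critical_points a b c d e g" unfolding critical_points_def qjac_bqf by simp
  thus False using cp PQ q(1) by simp
qed

theorem proposition2p2:
  fixes f :: "'k::field P1 \<Rightarrow> 'k P1" and P Q :: "'k P1"
  assumes "(2::'k) \<noteq> 0"
    and "quadratic_morphism f P Q"
    and "postcritically_finite f P Q"
  shows "finite_mapping_scheme (postcritical_orbit f P Q) f (f P) (f Q)"
proof -
  obtain a b c d e g where res: "bqf_resultant a b c d e g \<noteq> 0" and fq: "f = qmap a b c d e g"
    and cp: "critical_points a b c d e g = {P, Q}"
    using assms(2) unfolding quadratic_morphism_def by blast
  define \<Gamma> where "\<Gamma> = postcritical_orbit f P Q"
  have fin: "finite \<Gamma>" using assms(3) unfolding postcritically_finite_def \<Gamma>_def .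
  have critP: "qjac a b c d e g (hom_coords P) = 0" and critQ: "qjac a b c d e g (hom_coords Q) = 0"
    using cp unfolding critical_points_def by auto
  have PQ: "P \<noteq> Q" using P_ne_Q[OF res assms(1) cp] .
  have fibP: "x = P" if "f x = f P" for x using crit_fiber[OF res assms(1) critP] that fq by simp
  have fibQ: "x = Q" if "f x = f Q" for x using crit_fiber[OF res assms(1) critQ] that fq by simp
  have ne: "f P \<noteq> f Q" using fibP PQ by metis
  have G_eq: "\<Gamma> = {(f ^^ n) (f P) | n. True} \<union> {(f ^^ n) (f Q) | n. True}"
  proof -
    have A: "{(f ^^ n) R | n. n \<ge> 1} = {(f ^^ n) (f R) | n. True}" for R
    proof safe
      fix n :: nat assume "n \<ge> 1"
      then obtain m where "n = Suc m" by (cases n) auto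
      thus "\<exists>k. (f ^^ n) R = (f ^^ k) (f R) \<and> True" by (intro exI[of _ m]) (simp add: funpow_Suc_right funpow_swap1)
    next
      fix n
      show "\<exists>k. (f ^^ n) (f R) = (f ^^ k) R \<and> k \<ge> 1"
        by (intro exI[of _ "Suc n"]) (simp add: funpow_Suc_right funpow_swap1)
    qed
    show ?thesis unfolding \<Gamma>_def postcritical_orbit_def A ..
  qed
  have closed: "\<forall>x\<in>\<Gamma>. f x \<in> \<Gamma>"
  proof
    fix x assume "x \<in> \<Gamma>"
    then obtain n R where "x = (f ^^ n) (f R)" "R = P \<or> R = Q" unfolding G_eq by blast
    hence "f x = (f ^^ (Suc n)) (f R)" "R = P \<or> R = Q" by simp_all
    thus "f x \<in> \<Gamma>" unfolding G_eq by blast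
  qed
  have iP: "f P \<in> \<Gamma>" "f Q \<in> \<Gamma>" unfolding G_eq by (auto intro: exI[of _ 0])
  have c2: "\<forall>\<gamma>\<in>\<Gamma>. card {x\<in>\<Gamma>. f x = \<gamma>} \<le> 2"
    using fiber_le2[OF res] fq by simp
  have c1P: "card {x\<in>\<Gamma>. f x = f P} \<le> 1"
  proof -
    have "{x\<in>\<Gamma>. f x = f P} \<subseteq> {P}" using fibP by auto
    hence "card {x\<in>\<Gamma>. f x = f P} \<le> card {P}" by (rule card_mono[rotated]) simp
    thus ?thesis by simp
  qed
  have c1Q: "card {x\<in>\<Gamma>. f x = f Q} \<le> 1"
  proof -
    have "{x\<in>\<Gamma>. f x = f Q} \<subseteq> {Q}" using fibQ by auto
    hence "card {x\<in>\<Gamma>. f x = f Q} \<le> card {Q}" by (rule card_mono[rotated]) simp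
    thus ?thesis by simp
  qed
  show ?thesis
    unfolding finite_mapping_scheme_def \<Gamma>_def[symmetric]
    using fin closed iP ne G_eq c2 c1P c1Q by blast
qed

end
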